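(* Let $d\ge1$, $\mu\in\mathbb{R}^d$, $\Sigma\in\mathbb{R}^{d\times d}$ symmetric positive definite, $\alpha>0$, $\delta\in(0,1)$, and $Z\sim\mathcal{N}(\mu,\Sigma)$. Consider the feasible set $$\{e\in\mathbb{R}^d:\ \mathbb{P}[Z^\top e\ge\alpha]\ge1-\delta\}$$ of the agent's problem $\min_e \mathrm{Cost}(e)$ subject to this constraint. The problem is feasible (the set is nonempty) when $\delta>\Phi\big(-\|\Sigma^{-1/2}\mu\|_2\big)$, and infeasible otherwise, where $\Phi$ is the standard normal CDF.
   Context: $Z$ plays the role of the agent's Gaussian belief about the vector $\mathbb{C}h$ of total feature contributions; $\alpha>0$ is the amount by which the agent's score falls short of the threshold (standing assumption in the paper), and $1-\delta$ is the required probability of passing the classifier. *)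

theory Defs
  imports "HOL-Probability.Probability"
begin

definition Phi :: "real \<Rightarrow> real" where
  "Phi x = measure (density lborel (\<lambda>t. ennreal (std_normal_density t))) {..x}"

definition sym_pos_def_mat :: "real^'n^'n \<Rightarrow> bool" where
  "sym_pos_def_mat S \<longleftrightarrow> transpose S = S \<and> (\<forall>x. x \<noteq> 0 \<longrightarrow> x \<bullet> (S *v x) > 0)"

definition mvn_density :: "real^'n \<Rightarrow> real^'n^'n \<Rightarrow> real^'n \<Rightarrow> real" where
  "mvn_density mu S x =
     exp (- ((x - mu) \<bullet> (matrix_inv S *v (x - mu))) / 2)
       / sqrt ((2 * pi) ^ CARD('n) * det S)"

text \<open>The Mahalanobis norm ||Sigma^(-1/2) mu||_2, written out: its square is mu^T Sigma^(-1) mu.\<close>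
definition inv_sqrt_norm :: "real^'n^'n \<Rightarrow> real^'n \<Rightarrow> real" where
  "inv_sqrt_norm S mu = sqrt (mu \<bullet> (matrix_inv S *v mu))"

end

theory Submission
  imports Defs
begin


lemma fubini_axis:
  fixes G :: "'a::euclidean_space \<Rightarrow> ennreal" and b :: 'a
  assumes G[measurable]: "G \<in> borel_measurable borel" and b: "b \<in> Basis"
  shows "(\<integral>\<^sup>+y. G y \<partial>lborel) =
    (\<integral>\<^sup>+f. (\<integral>\<^sup>+r. G ((\<Sum>c\<in>Basis-{b}. f c *\<^sub>R c) + r *\<^sub>R b) \<partial>lborel) \<partial>(\<Pi>\<^sub>M c\<in>Basis-{b}. lborel))"
proof -
  interpret product_sigma_finite "\<lambda>_::'a. lborel::real measure"
    by standard
  have ins: "Basis = insert b (Basis - {b})" using b by auto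
  have "(\<integral>\<^sup>+y. G y \<partial>lborel) = (\<integral>\<^sup>+f. G (\<Sum>c\<in>Basis. f c *\<^sub>R c) \<partial>(\<Pi>\<^sub>M c\<in>Basis. lborel))"
    by (subst lborel_eq) (simp add: nn_integral_distr)
  also have "\<dots> = (\<integral>\<^sup>+f. G (\<Sum>c\<in>Basis. f c *\<^sub>R c) \<partial>(\<Pi>\<^sub>M c\<in>insert b (Basis-{b}). lborel))"
    using ins by simp
  also have "\<dots> = (\<integral>\<^sup>+f. (\<integral>\<^sup>+r. G (\<Sum>c\<in>Basis. (f(b:=r)) c *\<^sub>R c) \<partial>lborel) \<partial>(\<Pi>\<^sub>M c\<in>Basis-{b}. lborel))"
    apply (subst product_nn_integral_insert)
    using ins by auto
  also have "\<dots> = (\<integral>\<^sup>+f. (\<integral>\<^sup>+r. G ((\<Sum>c\<in>Basis-{b}. f c *\<^sub>R c) + r *\<^sub>R b) \<partial>lborel) \<partial>(\<Pi>\<^sub>M c\<in>Basis-{b}. lborel))"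
  proof (intro nn_integral_cong)
    fix f r
    have "(\<Sum>c\<in>Basis. (f(b:=r)) c *\<^sub>R c) = (f(b:=r)) b *\<^sub>R b + (\<Sum>c\<in>Basis-{b}. (f(b:=r)) c *\<^sub>R c)"
      using b by (simp add: sum.remove)
    also have "(\<Sum>c\<in>Basis-{b}. (f(b:=r)) c *\<^sub>R c) = (\<Sum>c\<in>Basis-{b}. f c *\<^sub>R c)"
      by (intro sum.cong) auto
    finally show "G (\<Sum>c\<in>Basis. (f(b:=r)) c *\<^sub>R c) = G ((\<Sum>c\<in>Basis-{b}. f c *\<^sub>R c) + r *\<^sub>R b)"
      by (simp add: add.commute)
  qed
  finally show ?thesis .
qed
lemma shear_elem:
  fixes G :: "'a::euclidean_space \<Rightarrow> ennreal" and a b :: 'a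
  assumes G[measurable]: "G \<in> borel_measurable borel" and a: "a \<in> Basis" and b: "b \<in> Basis"
    and ab: "a \<noteq> b"
  shows "(\<integral>\<^sup>+y. G (y + (c * (y \<bullet> a)) *\<^sub>R b) \<partial>lborel) = (\<integral>\<^sup>+y. G y \<partial>lborel)"
proof -
  have ba: "b \<bullet> a = 0" using a b ab by (simp add: inner_Basis)
  have "(\<integral>\<^sup>+y. G (y + (c * (y \<bullet> a)) *\<^sub>R b) \<partial>lborel) =
    (\<integral>\<^sup>+f. (\<integral>\<^sup>+r. G (((\<Sum>d\<in>Basis-{b}. f d *\<^sub>R d) + r *\<^sub>R b) + (c * (((\<Sum>d\<in>Basis-{b}. f d *\<^sub>R d) + r *\<^sub>R b) \<bullet> a)) *\<^sub>R b) \<partial>lborel) \<partial>(\<Pi>\<^sub>M d\<in>Basis-{b}. lborel))"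
    using fubini_axis[OF _ b, of "\<lambda>y. G (y + (c * (y \<bullet> a)) *\<^sub>R b)"] by simp
  also have "\<dots> = (\<integral>\<^sup>+f. (\<integral>\<^sup>+r. G ((\<Sum>d\<in>Basis-{b}. f d *\<^sub>R d) + r *\<^sub>R b) \<partial>lborel) \<partial>(\<Pi>\<^sub>M d\<in>Basis-{b}. lborel))"
  proof -
    have key: "(\<integral>\<^sup>+r. G (v + r *\<^sub>R b + (c * ((v + r *\<^sub>R b) \<bullet> a)) *\<^sub>R b) \<partial>lborel) = (\<integral>\<^sup>+r. G (v + r *\<^sub>R b) \<partial>lborel)" for v
    proof -
      have eq: "v + r *\<^sub>R b + (c * ((v + r *\<^sub>R b) \<bullet> a)) *\<^sub>R b = v + (c * (v \<bullet> a) + 1 * r) *\<^sub>R b" for r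
        using ba by (simp add: algebra_simps)
      have "(\<integral>\<^sup>+r. G (v + r *\<^sub>R b) \<partial>lborel) = ennreal \<bar>1\<bar> * (\<integral>\<^sup>+r. G (v + (c * (v \<bullet> a) + 1 * r) *\<^sub>R b) \<partial>lborel)"
        by (rule nn_integral_real_affine) auto
      then show ?thesis
        unfolding eq by simp
    qed
    show ?thesis by (simp only: key)
  qed
  also have "\<dots> = (\<integral>\<^sup>+y. G y \<partial>lborel)"
    by (rule fubini_axis[OF G b, symmetric])
  finally show ?thesis .
qed

lemma shear_gen_aux:
  fixes b :: "'a::euclidean_space" and w :: 'a
  assumes b: "b \<in> Basis" and J: "J \<subseteq> Basis - {b}"
  shows "\<forall>G. G \<in> borel_measurable borel \<longrightarrow>
    (\<integral>\<^sup>+y. G (y + (y \<bullet> b) *\<^sub>R (\<Sum>a\<in>J. (w \<bullet> a) *\<^sub>R a)) \<partial>lborel) = (\<integral>\<^sup>+y. G y \<partial>lborel)"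
proof -
  have "finite J" using J finite_Basis finite_subset by blast
  then show ?thesis using J
  proof (induction J rule: finite_induct)
    case empty
    then show ?case by simp
  next
    case (insert a J)
    show ?case
    proof (intro allI impI)
      fix G :: "'a \<Rightarrow> ennreal" assume G[measurable]: "G \<in> borel_measurable borel"
      have a: "a \<in> Basis" "a \<noteq> b" using insert by auto
      define E where "E = (\<lambda>z. z + ((w \<bullet> a) * (z \<bullet> b)) *\<^sub>R a)"
      have Em[measurable]: "(\<lambda>z. G (E z)) \<in> borel_measurable borel" unfolding E_def by measurable
      have Jb: "(\<Sum>a\<in>J. (w \<bullet> a) *\<^sub>R a) \<bullet> b = 0"
        using insert b by (auto simp: inner_sum_left inner_Basis subset_iff intro!: sum.neutral)
      have eq: "y + (y \<bullet> b) *\<^sub>R (\<Sum>a\<in>insert a J. (w \<bullet> a) *\<^sub>R a) = E (y + (y \<bullet> b) *\<^sub>R (\<Sum>a\<in>J. (w \<bullet> a) *\<^sub>R a))" for y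
        using insert Jb by (simp add: E_def algebra_simps)
      have "(\<integral>\<^sup>+y. G (y + (y \<bullet> b) *\<^sub>R (\<Sum>a\<in>insert a J. (w \<bullet> a) *\<^sub>R a)) \<partial>lborel)
          = (\<integral>\<^sup>+y. G (E (y + (y \<bullet> b) *\<^sub>R (\<Sum>a\<in>J. (w \<bullet> a) *\<^sub>R a))) \<partial>lborel)"
        by (simp only: eq)
      also have "\<dots> = (\<integral>\<^sup>+y. G (E y) \<partial>lborel)"
        using insert.IH[rule_format, OF _ Em] insert.prems by auto
      also have "\<dots> = (\<integral>\<^sup>+y. G y \<partial>lborel)"
        unfolding E_def by (rule shear_elem[OF G b a(1) a(2)[symmetric]])
      finally show "(\<integral>\<^sup>+y. G (y + (y \<bullet> b) *\<^sub>R (\<Sum>a\<in>insert a J. (w \<bullet> a) *\<^sub>R a)) \<partial>lborel) = (\<integral>\<^sup>+y. G y \<partial>lborel)" .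
    qed
  qed
qed

lemma shear:
  fixes b :: "'a::euclidean_space" and w :: 'a and G :: "'a \<Rightarrow> ennreal"
  assumes b: "b \<in> Basis" and wb: "w \<bullet> b = 0" and G: "G \<in> borel_measurable borel"
  shows "(\<integral>\<^sup>+y. G (y + (y \<bullet> b) *\<^sub>R w) \<partial>lborel) = (\<integral>\<^sup>+y. G y \<partial>lborel)"
proof -
  have "w = (\<Sum>a\<in>Basis. (w \<bullet> a) *\<^sub>R a)" by (simp add: euclidean_representation)
  also have "\<dots> = (w \<bullet> b) *\<^sub>R b + (\<Sum>a\<in>Basis-{b}. (w \<bullet> a) *\<^sub>R a)"
    using b by (simp add: sum.remove)
  finally have w: "w = (\<Sum>a\<in>Basis-{b}. (w \<bullet> a) *\<^sub>R a)" using wb by simp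
  show ?thesis
    by (subst w) (rule shear_gen_aux[OF b order_refl, rule_format, OF G])
qed

lemma vf_inner_b:
  fixes b :: "'a::euclidean_space"
  assumes b: "b \<in> Basis"
  shows "(\<Sum>c\<in>Basis-{b}. f c *\<^sub>R c) \<bullet> b = 0"
  using b by (auto simp: inner_sum_left inner_Basis intro!: sum.neutral)

lemma fubini_dir:
  fixes G :: "'a::euclidean_space \<Rightarrow> ennreal" and b d :: 'a
  assumes G[measurable]: "G \<in> borel_measurable borel" and b: "b \<in> Basis" and db: "d \<bullet> b = 1"
  shows "(\<integral>\<^sup>+y. G y \<partial>lborel) =
    (\<integral>\<^sup>+f. (\<integral>\<^sup>+r. G ((\<Sum>c\<in>Basis-{b}. f c *\<^sub>R c) + r *\<^sub>R d) \<partial>lborel) \<partial>(\<Pi>\<^sub>M c\<in>Basis-{b}. lborel))"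
proof -
  have wb: "(d - b) \<bullet> b = 0" using db b by (simp add: inner_diff_left)
  have "(\<integral>\<^sup>+y. G y \<partial>lborel) = (\<integral>\<^sup>+y. G (y + (y \<bullet> b) *\<^sub>R (d - b)) \<partial>lborel)"
    by (rule shear[OF b wb G, symmetric])
  also have "\<dots> = (\<integral>\<^sup>+f. (\<integral>\<^sup>+r. G (((\<Sum>c\<in>Basis-{b}. f c *\<^sub>R c) + r *\<^sub>R b) + (((\<Sum>c\<in>Basis-{b}. f c *\<^sub>R c) + r *\<^sub>R b) \<bullet> b) *\<^sub>R (d - b)) \<partial>lborel) \<partial>(\<Pi>\<^sub>M c\<in>Basis-{b}. lborel))"
    using fubini_axis[OF _ b, of "\<lambda>y. G (y + (y \<bullet> b) *\<^sub>R (d - b))"] by simp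
  also have "\<dots> = (\<integral>\<^sup>+f. (\<integral>\<^sup>+r. G ((\<Sum>c\<in>Basis-{b}. f c *\<^sub>R c) + r *\<^sub>R d) \<partial>lborel) \<partial>(\<Pi>\<^sub>M c\<in>Basis-{b}. lborel))"
  proof -
    have eq: "((\<Sum>c\<in>Basis-{b}. f c *\<^sub>R c) + r *\<^sub>R b) + (((\<Sum>c\<in>Basis-{b}. f c *\<^sub>R c) + r *\<^sub>R b) \<bullet> b) *\<^sub>R (d - b)
      = (\<Sum>c\<in>Basis-{b}. f c *\<^sub>R c) + r *\<^sub>R d" for f r
      using vf_inner_b[OF b, of f] b by (simp add: inner_add_left algebra_simps)
    show ?thesis by (simp only: eq)
  qed
  finally show ?thesis .
qed

lemma gauss_split:
  fixes Q :: "'a::euclidean_space \<Rightarrow> real" and e u :: 'a and c :: real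
  assumes Q[measurable]: "Q \<in> borel_measurable borel"
    and dec: "\<And>y. Q y = c * (y \<bullet> e)^2 + Q (y - (y \<bullet> e) *\<^sub>R u)"
    and ue: "u \<bullet> e = 1"
  shows "\<exists>C. \<forall>\<phi>::real\<Rightarrow>ennreal. \<phi> \<in> borel_measurable borel \<longrightarrow>
     (\<integral>\<^sup>+y. ennreal (exp (- Q y / 2)) * \<phi> (y \<bullet> e) \<partial>lborel)
       = C * (\<integral>\<^sup>+t. ennreal (exp (- c * t^2 / 2)) * \<phi> t \<partial>lborel)"
proof -
  have "u \<noteq> 0" using ue by auto
  then obtain b where b: "b \<in> Basis" and ub: "u \<bullet> b \<noteq> 0"
    using euclidean_all_zero_iff by blast
  define d where "d = (1 / (u \<bullet> b)) *\<^sub>R u"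
  have db: "d \<bullet> b = 1" using ub by (simp add: d_def)
  define g where "g = (\<lambda>v. ennreal (exp (- Q (v - (v \<bullet> e) *\<^sub>R u) / 2)))"
  define C where "C = ennreal \<bar>u \<bullet> b\<bar> * (\<integral>\<^sup>+f. g (\<Sum>c\<in>Basis-{b}. f c *\<^sub>R c) \<partial>(\<Pi>\<^sub>M c\<in>Basis-{b}. lborel))"
  show ?thesis
  proof (intro exI allI impI)
    fix \<phi> :: "real \<Rightarrow> ennreal" assume \<phi>[measurable]: "\<phi> \<in> borel_measurable borel"
    define \<psi> where "\<psi> = (\<lambda>t. ennreal (exp (- c * t^2 / 2)) * \<phi> t)"
    have \<psi>m[measurable]: "\<psi> \<in> borel_measurable borel" unfolding \<psi>_def by measurable
    have inner: "(\<integral>\<^sup>+r. ennreal (exp (- Q (v + r *\<^sub>R d) / 2)) * \<phi> ((v + r *\<^sub>R d) \<bullet> e) \<partial>lborel)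
        = g v * (ennreal \<bar>u \<bullet> b\<bar> * (\<integral>\<^sup>+t. \<psi> t \<partial>lborel))" for v
    proof -
      have pt: "ennreal (exp (- Q (v + r *\<^sub>R d) / 2)) * \<phi> ((v + r *\<^sub>R d) \<bullet> e)
          = g v * \<psi> (v \<bullet> e + (1 / (u \<bullet> b)) * r)" for r
      proof -
        have t: "(v + r *\<^sub>R d) \<bullet> e = v \<bullet> e + (1 / (u \<bullet> b)) * r"
          using ue by (simp add: d_def inner_add_left)
        have w: "v + r *\<^sub>R d - (v \<bullet> e + (1 / (u \<bullet> b)) * r) *\<^sub>R u = v - (v \<bullet> e) *\<^sub>R u"
          by (simp add: d_def algebra_simps)
        have "Q (v + r *\<^sub>R d) = c * (v \<bullet> e + (1 / (u \<bullet> b)) * r)^2 + Q (v - (v \<bullet> e) *\<^sub>R u)"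
          using dec[of "v + r *\<^sub>R d"] unfolding t w .
        then have "exp (- Q (v + r *\<^sub>R d) / 2) = exp (- Q (v - (v \<bullet> e) *\<^sub>R u) / 2) * exp (- c * (v \<bullet> e + (1 / (u \<bullet> b)) * r)^2 / 2)"
          by (simp add: exp_add[symmetric] field_simps)
        then show ?thesis
          unfolding g_def \<psi>_def t by (simp add: ennreal_mult mult.assoc)
      qed
      have aff: "(\<integral>\<^sup>+t. \<psi> t \<partial>lborel) = ennreal \<bar>1 / (u \<bullet> b)\<bar> * (\<integral>\<^sup>+r. \<psi> (v \<bullet> e + (1 / (u \<bullet> b)) * r) \<partial>lborel)"
        using ub by (intro nn_integral_real_affine) auto
      have "ennreal \<bar>u \<bullet> b\<bar> * (\<integral>\<^sup>+t. \<psi> t \<partial>lborel) = (\<integral>\<^sup>+r. \<psi> (v \<bullet> e + (1 / (u \<bullet> b)) * r) \<partial>lborel)"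
        unfolding aff mult.assoc[symmetric] using ub
        by (simp add: ennreal_mult[symmetric] abs_mult[symmetric])
      moreover have "(\<integral>\<^sup>+r. g v * \<psi> (v \<bullet> e + (1 / (u \<bullet> b)) * r) \<partial>lborel) = g v * (\<integral>\<^sup>+r. \<psi> (v \<bullet> e + (1 / (u \<bullet> b)) * r) \<partial>lborel)"
        by (rule nn_integral_cmult) measurable
      moreover have "(\<integral>\<^sup>+r. ennreal (exp (- Q (v + r *\<^sub>R d) / 2)) * \<phi> ((v + r *\<^sub>R d) \<bullet> e) \<partial>lborel)
          = (\<integral>\<^sup>+r. g v * \<psi> (v \<bullet> e + (1 / (u \<bullet> b)) * r) \<partial>lborel)"
        by (simp only: pt)
      ultimately show ?thesis by simp
    qed
    have gm: "(\<lambda>f. g (\<Sum>c\<in>Basis-{b}. f c *\<^sub>R c)) \<in> borel_measurable (\<Pi>\<^sub>M c\<in>Basis-{b}. lborel)"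
      unfolding g_def by measurable
    have "(\<integral>\<^sup>+y. ennreal (exp (- Q y / 2)) * \<phi> (y \<bullet> e) \<partial>lborel)
       = (\<integral>\<^sup>+f. (\<integral>\<^sup>+r. ennreal (exp (- Q ((\<Sum>c\<in>Basis-{b}. f c *\<^sub>R c) + r *\<^sub>R d) / 2)) * \<phi> (((\<Sum>c\<in>Basis-{b}. f c *\<^sub>R c) + r *\<^sub>R d) \<bullet> e) \<partial>lborel) \<partial>(\<Pi>\<^sub>M c\<in>Basis-{b}. lborel))"
      by (rule fubini_dir[OF _ b db]) measurable
    also have "\<dots> = (\<integral>\<^sup>+f. g (\<Sum>c\<in>Basis-{b}. f c *\<^sub>R c) * (ennreal \<bar>u \<bullet> b\<bar> * (\<integral>\<^sup>+t. \<psi> t \<partial>lborel)) \<partial>(\<Pi>\<^sub>M c\<in>Basis-{b}. lborel))"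
      by (simp only: inner)
    also have "\<dots> = C * (\<integral>\<^sup>+t. \<psi> t \<partial>lborel)"
      unfolding C_def by (subst nn_integral_multc[OF gm]) (simp add: mult_ac)
    finally show "(\<integral>\<^sup>+y. ennreal (exp (- Q y / 2)) * \<phi> (y \<bullet> e) \<partial>lborel)
       = C * (\<integral>\<^sup>+t. ennreal (exp (- c * t^2 / 2)) * \<phi> t \<partial>lborel)" unfolding \<psi>_def .
  qed
qed



lemma spd_sym:
  fixes S :: "real^'n^'n"
  assumes "sym_pos_def_mat S"
  shows "x \<bullet> (S *v y) = y \<bullet> (S *v x)"
proof -
  have "x \<bullet> (S *v y) = (x v* S) \<bullet> y" by (simp add: dot_lmul_matrix)
  also have "x v* S = transpose S *v x" by simp
  also have "\<dots> = S *v x" using assms by (simp add: sym_pos_def_mat_def)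
  finally show ?thesis by (simp add: inner_commute)
qed

lemma spd_pos: "sym_pos_def_mat S \<Longrightarrow> x \<noteq> 0 \<Longrightarrow> x \<bullet> (S *v x) > 0"
  by (simp add: sym_pos_def_mat_def)

lemma spd_nonneg: "sym_pos_def_mat S \<Longrightarrow> x \<bullet> (S *v x) \<ge> 0"
  by (cases "x = 0") (auto dest: spd_pos[of S x])

lemma spd_inv:
  fixes S :: "real^'n^'n"
  assumes "sym_pos_def_mat S"
  shows "S ** matrix_inv S = mat 1 \<and> matrix_inv S ** S = mat 1"
proof -
  have "\<forall>x. S *v x = 0 \<longrightarrow> x = 0"
    using spd_pos[OF assms] by (metis inner_zero_right less_irrefl)
  then have "invertible S"
    using invertible_left_inverse matrix_left_invertible_ker by blast
  then show ?thesis unfolding invertible_def matrix_inv_def by (rule someI_ex)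
qed

lemma spd_inv_apply:
  fixes S :: "real^'n^'n"
  assumes "sym_pos_def_mat S"
  shows "S *v (matrix_inv S *v x) = x" "matrix_inv S *v (S *v x) = x"
  using spd_inv[OF assms] by (simp_all add: matrix_vector_mul_assoc)

lemma spd_inv_sym:
  fixes S :: "real^'n^'n"
  assumes "sym_pos_def_mat S"
  shows "x \<bullet> (matrix_inv S *v y) = y \<bullet> (matrix_inv S *v x)"
proof -
  let ?P = "matrix_inv S"
  have "x \<bullet> (?P *v y) = (S *v (?P *v x)) \<bullet> (?P *v y)" by (simp add: spd_inv_apply[OF assms])
  also have "\<dots> = (?P *v x) \<bullet> (S *v (?P *v y))" using spd_sym[OF assms] by (simp add: inner_commute)
  also have "\<dots> = y \<bullet> (?P *v x)" by (simp add: spd_inv_apply[OF assms] inner_commute)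
  finally show ?thesis .
qed

lemma spd_inv_pos:
  fixes S :: "real^'n^'n"
  assumes "sym_pos_def_mat S" "x \<noteq> 0"
  shows "x \<bullet> (matrix_inv S *v x) > 0"
proof -
  let ?P = "matrix_inv S"
  have "?P *v x \<noteq> 0" using assms spd_inv_apply(1)[OF assms(1), of x] by auto
  then have "(?P *v x) \<bullet> (S *v (?P *v x)) > 0" by (rule spd_pos[OF assms(1)])
  then show ?thesis by (simp add: spd_inv_apply[OF assms(1)] inner_commute)
qed

lemma quad_dec:
  fixes S :: "real^'n^'n" and e :: "real^'n"
  assumes S: "sym_pos_def_mat S" and e: "e \<noteq> 0"
  defines "s \<equiv> e \<bullet> (S *v e)"
  defines "u \<equiv> (1/s) *\<^sub>R (S *v e)"
  shows "u \<bullet> e = 1"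
    and "y \<bullet> (matrix_inv S *v y) = (1/s) * (y \<bullet> e)^2 + (y - (y \<bullet> e) *\<^sub>R u) \<bullet> (matrix_inv S *v (y - (y \<bullet> e) *\<^sub>R u))"
proof -
  let ?P = "matrix_inv S"
  have s: "s > 0" unfolding s_def using spd_pos[OF S e] .
  show ue: "u \<bullet> e = 1" using s unfolding u_def s_def by (simp add: inner_commute)
  have Pu: "?P *v u = (1/s) *\<^sub>R e" unfolding u_def by (simp add: matrix_vector_mult_scaleR spd_inv_apply[OF S])
  define t where "t = y \<bullet> e"
  define w where "w = y - t *\<^sub>R u"
  have y: "y = w + t *\<^sub>R u" unfolding w_def by simp
  have we: "w \<bullet> e = 0" unfolding w_def t_def using ue by (simp add: inner_diff_left)
  have "y \<bullet> (?P *v y) = w \<bullet> (?P *v w) + 2 * t * (w \<bullet> (?P *v u)) + t^2 * (u \<bullet> (?P *v u))"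
    unfolding y using spd_inv_sym[OF S, of u w]
    by (simp add: matrix_vector_right_distrib matrix_vector_mult_scaleR inner_add_left inner_add_right power2_eq_square algebra_simps)
  also have "\<dots> = w \<bullet> (?P *v w) + t^2 / s"
    using we ue by (simp add: Pu)
  finally show "y \<bullet> (?P *v y) = (1/s) * (y \<bullet> e)^2 + (y - (y \<bullet> e) *\<^sub>R u) \<bullet> (?P *v (y - (y \<bullet> e) *\<^sub>R u))"
    unfolding w_def t_def by simp
qed



lemma std_subst:
  fixes s :: real and \<psi> :: "real \<Rightarrow> ennreal"
  assumes s: "s > 0" and \<psi>[measurable]: "\<psi> \<in> borel_measurable borel"
  shows "(\<integral>\<^sup>+t. ennreal (exp (- (1/s) * t^2 / 2)) * \<psi> t \<partial>lborel)
    = ennreal (sqrt s * sqrt (2 * pi)) * (\<integral>\<^sup>+z. ennreal (std_normal_density z) * \<psi> (sqrt s * z) \<partial>lborel)"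
proof -
  have ss: "sqrt s \<noteq> 0" using s by simp
  have "(\<integral>\<^sup>+t. ennreal (exp (- (1/s) * t^2 / 2)) * \<psi> t \<partial>lborel)
      = ennreal \<bar>sqrt s\<bar> * (\<integral>\<^sup>+z. ennreal (exp (- (1/s) * (0 + sqrt s * z)^2 / 2)) * \<psi> (0 + sqrt s * z) \<partial>lborel)"
    by (rule nn_integral_real_affine[OF _ ss]) measurable
  also have "(\<lambda>z. ennreal (exp (- (1/s) * (0 + sqrt s * z)^2 / 2)) * \<psi> (0 + sqrt s * z))
      = (\<lambda>z. ennreal (sqrt (2 * pi)) * (ennreal (std_normal_density z) * \<psi> (sqrt s * z)))"
  proof
    fix z
    have "exp (- (1/s) * (0 + sqrt s * z)^2 / 2) = sqrt (2 * pi) * std_normal_density z"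
      using s by (simp add: std_normal_density_def power_mult_distrib)
    then show "ennreal (exp (- (1/s) * (0 + sqrt s * z)^2 / 2)) * \<psi> (0 + sqrt s * z)
      = ennreal (sqrt (2 * pi)) * (ennreal (std_normal_density z) * \<psi> (sqrt s * z))"
      by (simp add: ennreal_mult mult.assoc)
  qed
  also have "(\<integral>\<^sup>+z. ennreal (sqrt (2 * pi)) * (ennreal (std_normal_density z) * \<psi> (sqrt s * z)) \<partial>lborel)
      = ennreal (sqrt (2 * pi)) * (\<integral>\<^sup>+z. ennreal (std_normal_density z) * \<psi> (sqrt s * z) \<partial>lborel)"
    by (rule nn_integral_cmult) measurable
  finally show ?thesis using s by (simp add: ennreal_mult mult.assoc)
qed

lemma Q_meas: "(\<lambda>y::real^'n. y \<bullet> (P *v y)) \<in> borel_measurable borel"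
  by (intro borel_measurable_continuous_onI continuous_intros)



lemma mvn_law:
  fixes S :: "real^'n^'n" and mu e :: "real^'n"
  assumes S: "sym_pos_def_mat S" and e: "e \<noteq> 0"
  shows "\<exists>D. \<forall>\<phi>::real\<Rightarrow>ennreal. \<phi> \<in> borel_measurable borel \<longrightarrow>
    (\<integral>\<^sup>+x. ennreal (mvn_density mu S x) * \<phi> (x \<bullet> e) \<partial>lborel)
     = D * (\<integral>\<^sup>+z. ennreal (std_normal_density z) * \<phi> (mu \<bullet> e + sqrt (e \<bullet> (S *v e)) * z) \<partial>lborel)"
proof -
  define s where "s = e \<bullet> (S *v e)"
  define u where "u = (1/s) *\<^sub>R (S *v e)"
  let ?P = "matrix_inv S"
  define Q where "Q = (\<lambda>y::real^'n. y \<bullet> (?P *v y))"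
  have s: "s > 0" unfolding s_def using spd_pos[OF S e] .
  have ue: "u \<bullet> e = 1" using quad_dec(1)[OF S e] unfolding s_def u_def .
  have dec: "Q y = (1/s) * (y \<bullet> e)^2 + Q (y - (y \<bullet> e) *\<^sub>R u)" for y
    using quad_dec(2)[OF S e, of y] unfolding s_def u_def Q_def .
  have Qm: "Q \<in> borel_measurable borel" unfolding Q_def by (rule Q_meas)
  obtain C where C: "\<And>\<phi>::real\<Rightarrow>ennreal. \<phi> \<in> borel_measurable borel \<Longrightarrow>
     (\<integral>\<^sup>+y. ennreal (exp (- Q y / 2)) * \<phi> (y \<bullet> e) \<partial>lborel)
       = C * (\<integral>\<^sup>+t. ennreal (exp (- (1/s) * t^2 / 2)) * \<phi> t \<partial>lborel)"
    using gauss_split[OF Qm dec ue] by blast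
  define K where "K = ennreal (1 / sqrt ((2 * pi) ^ CARD('n) * det S))"
  show ?thesis
  proof (intro exI allI impI)
    fix \<phi> :: "real \<Rightarrow> ennreal" assume \<phi>[measurable]: "\<phi> \<in> borel_measurable borel"
    define \<phi>' where "\<phi>' = (\<lambda>t. \<phi> (mu \<bullet> e + t))"
    have \<phi>'m[measurable]: "\<phi>' \<in> borel_measurable borel" unfolding \<phi>'_def by measurable
    have mvm: "(\<lambda>x. ennreal (mvn_density mu S x) * \<phi> (x \<bullet> e)) \<in> borel_measurable borel"
      unfolding mvn_density_def using Q_meas[of ?P] by measurable
    have "(\<integral>\<^sup>+x. ennreal (mvn_density mu S x) * \<phi> (x \<bullet> e) \<partial>lborel)
        = (\<integral>\<^sup>+x. ennreal (mvn_density mu S x) * \<phi> (x \<bullet> e) \<partial>(distr lborel borel ((+) mu)))"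
      by (simp add: lborel_distr_plus)
    also have "\<dots> = (\<integral>\<^sup>+y. ennreal (mvn_density mu S (mu + y)) * \<phi> ((mu + y) \<bullet> e) \<partial>lborel)"
      by (rule nn_integral_distr) (auto simp: mvm)
    also have "\<dots> = (\<integral>\<^sup>+y. K * (ennreal (exp (- Q y / 2)) * \<phi>' (y \<bullet> e)) \<partial>lborel)"
    proof (intro nn_integral_cong)
      fix y :: "real^'n"
      have "mvn_density mu S (mu + y) = exp (- Q y / 2) * (1 / sqrt ((2 * pi) ^ CARD('n) * det S))"
        unfolding mvn_density_def Q_def by simp
      then have "ennreal (mvn_density mu S (mu + y)) = ennreal (exp (- Q y / 2)) * ennreal (1 / sqrt ((2 * pi) ^ CARD('n) * det S))"
        by (simp only: ennreal_mult'[OF exp_ge_zero])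
      then show "ennreal (mvn_density mu S (mu + y)) * \<phi> ((mu + y) \<bullet> e) = K * (ennreal (exp (- Q y / 2)) * \<phi>' (y \<bullet> e))"
        unfolding K_def \<phi>'_def by (simp only: inner_add_left mult_ac)
    qed
    also have "\<dots> = K * (\<integral>\<^sup>+y. ennreal (exp (- Q y / 2)) * \<phi>' (y \<bullet> e) \<partial>lborel)"
      by (rule nn_integral_cmult) (use Qm in measurable)
    also have "\<dots> = K * (C * (\<integral>\<^sup>+t. ennreal (exp (- (1/s) * t^2 / 2)) * \<phi>' t \<partial>lborel))"
      by (simp only: C[OF \<phi>'m])
    also have "\<dots> = K * (C * (ennreal (sqrt s * sqrt (2 * pi)) * (\<integral>\<^sup>+z. ennreal (std_normal_density z) * \<phi>' (sqrt s * z) \<partial>lborel)))"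
      by (simp only: std_subst[OF s \<phi>'m])
    finally show "(\<integral>\<^sup>+x. ennreal (mvn_density mu S x) * \<phi> (x \<bullet> e) \<partial>lborel)
     = (K * C * ennreal (sqrt s * sqrt (2 * pi))) * (\<integral>\<^sup>+z. ennreal (std_normal_density z) * \<phi> (mu \<bullet> e + sqrt (e \<bullet> (S *v e)) * z) \<partial>lborel)"
      unfolding \<phi>'_def s_def by (simp add: mult_ac)
  qed
qed



abbreviation "NN \<equiv> density lborel (\<lambda>t. ennreal (std_normal_density t))"

lemma NN_prob: "prob_space NN"
  using prob_space_normal_density by simp

lemma prob_e:
  fixes M :: "'a measure" and Z :: "'a \<Rightarrow> real^'n" and S :: "real^'n^'n" and mu e :: "real^'n"
  assumes M: "prob_space M" and S: "sym_pos_def_mat S" and e: "e \<noteq> 0"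
    and Z: "distributed M lborel Z (\<lambda>x. ennreal (mvn_density mu S x))"
  shows "measure M {\<omega> \<in> space M. Z \<omega> \<bullet> e \<ge> alpha} = measure NN {(alpha - mu \<bullet> e) / sqrt (e \<bullet> (S *v e))..}"
proof -
  define \<sigma> where "\<sigma> = sqrt (e \<bullet> (S *v e))"
  have \<sigma>: "\<sigma> > 0" unfolding \<sigma>_def using spd_pos[OF S e] by simp
  obtain D where D: "\<And>\<phi>::real\<Rightarrow>ennreal. \<phi> \<in> borel_measurable borel \<Longrightarrow>
    (\<integral>\<^sup>+x. ennreal (mvn_density mu S x) * \<phi> (x \<bullet> e) \<partial>lborel)
     = D * (\<integral>\<^sup>+z. ennreal (std_normal_density z) * \<phi> (mu \<bullet> e + \<sigma> * z) \<partial>lborel)"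
    using mvn_law[OF S e, of mu] unfolding \<sigma>_def by blast
  interpret M: prob_space M by (rule M)
  interpret N: prob_space NN by (rule NN_prob)
  have "emeasure M (Z -` UNIV \<inter> space M) = (\<integral>\<^sup>+x. ennreal (mvn_density mu S x) * indicator UNIV x \<partial>lborel)"
    by (rule distributed_emeasure[OF Z]) simp
  then have "1 = (\<integral>\<^sup>+x. ennreal (mvn_density mu S x) * (\<lambda>_. 1) (x \<bullet> e) \<partial>lborel)"
    by (simp add: M.emeasure_space_1)
  also have "\<dots> = D * (\<integral>\<^sup>+z. ennreal (std_normal_density z) * (\<lambda>_. 1) (mu \<bullet> e + \<sigma> * z) \<partial>lborel)"
    by (rule D) simp
  also have "(\<integral>\<^sup>+z. ennreal (std_normal_density z) * (\<lambda>_. 1) (mu \<bullet> e + \<sigma> * z) \<partial>lborel) = emeasure NN (space NN)"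
    by (simp add: emeasure_density)
  finally have D1: "D = 1" using N.emeasure_space_1 by simp
  define t0 where "t0 = (alpha - mu \<bullet> e) / \<sigma>"
  have A: "{x::real^'n. alpha \<le> x \<bullet> e} \<in> sets lborel" by measurable
  have "emeasure M {\<omega> \<in> space M. Z \<omega> \<bullet> e \<ge> alpha} = emeasure M (Z -` {x. alpha \<le> x \<bullet> e} \<inter> space M)"
    by (intro arg_cong[where f="emeasure M"]) auto
  also have "\<dots> = (\<integral>\<^sup>+x. ennreal (mvn_density mu S x) * indicator {x. alpha \<le> x \<bullet> e} x \<partial>lborel)"
    by (rule distributed_emeasure[OF Z A])
  also have "\<dots> = (\<integral>\<^sup>+x. ennreal (mvn_density mu S x) * indicator {alpha..} (x \<bullet> e) \<partial>lborel)"
    by (intro nn_integral_cong) (simp split: split_indicator)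
  also have "\<dots> = D * (\<integral>\<^sup>+z. ennreal (std_normal_density z) * indicator {alpha..} (mu \<bullet> e + \<sigma> * z) \<partial>lborel)"
    by (rule D) simp
  also have "\<dots> = (\<integral>\<^sup>+z. ennreal (std_normal_density z) * indicator {t0..} z \<partial>lborel)"
  proof -
    have "alpha \<le> mu \<bullet> e + \<sigma> * z \<longleftrightarrow> t0 \<le> z" for z
      using \<sigma> unfolding t0_def by (simp add: divide_le_eq algebra_simps)
    then show ?thesis unfolding D1 mult_1 by (intro nn_integral_cong) (simp split: split_indicator)
  qed
  also have "\<dots> = emeasure NN {t0..}"
    by (simp add: emeasure_density)
  finally show ?thesis unfolding measure_def t0_def \<sigma>_def by simp
qed



lemma NN_real: "real_distribution NN"
proof -
  interpret prob_space NN by (rule NN_prob)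
  show ?thesis by standard simp
qed

lemma Phi_cdf: "Phi = cdf NN"
  by (simp add: fun_eq_iff Phi_def cdf_def)

lemma NN_upper: "measure NN {t..} = 1 - Phi t"
proof -
  interpret prob_space NN by (rule NN_prob)
  have null: "{t} \<in> null_sets NN"
    by (simp add: null_sets_def emeasure_density)
  have "measure NN {..t} = measure NN ({..<t} \<union> {t})"
    by (intro arg_cong[where f="measure NN"]) auto
  also have "\<dots> = measure NN {..<t}"
    by (rule measure_Un_null_set[OF _ null]) simp
  finally have a: "measure NN {..t} = measure NN {..<t}" .
  have "measure NN {t..} = measure NN (space NN - {..<t})"
    by (intro arg_cong[where f="measure NN"]) auto
  also have "\<dots> = 1 - measure NN {..<t}"
    by (rule prob_compl) simp
  finally show ?thesis using a by (simp add: Phi_def)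
qed

lemma Phi_strict_mono:
  assumes "x < y" shows "Phi x < Phi y"
proof -
  interpret real_distribution NN by (rule NN_real)
  define m where "m = std_normal_density (\<bar>x\<bar> + \<bar>y\<bar>)"
  have m: "m > 0" unfolding m_def by (simp add: std_normal_density_def)
  have le: "m \<le> std_normal_density z" if "x < z" "z \<le> y" for z
  proof -
    have "\<bar>z\<bar> \<le> \<bar>x\<bar> + \<bar>y\<bar>" using that by auto
    then have "z^2 \<le> (\<bar>x\<bar> + \<bar>y\<bar>)^2"
      by (metis abs_ge_zero power2_abs power_mono)
    then show ?thesis unfolding m_def std_normal_density_def by (intro mult_left_mono) auto
  qed
  have "ennreal (m * (y - x)) = (\<integral>\<^sup>+z. ennreal m * indicator {x<..y} z \<partial>lborel)"
    using assms m by (subst nn_integral_cmult_indicator) (auto simp: ennreal_mult)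
  also have "\<dots> \<le> (\<integral>\<^sup>+z. ennreal (std_normal_density z) * indicator {x<..y} z \<partial>lborel)"
    using le by (intro nn_integral_mono) (auto split: split_indicator)
  also have "\<dots> = emeasure NN {x<..y}"
    by (simp add: emeasure_density)
  also have "\<dots> = ennreal (measure NN {x<..y})" by (simp add: emeasure_eq_measure)
  finally have "m * (y - x) \<le> measure NN {x<..y}"
    by (simp add: ennreal_le_iff2) (use measure_nonneg[of NN "{x<..y}"] in linarith)
  moreover have "m * (y - x) > 0" using m assms by simp
  ultimately have "measure NN {x<..y} > 0" by linarith
  then show ?thesis unfolding Phi_cdf using cdf_diff_eq[OF assms] by simp
qed

lemma Phi_mono: "x \<le> y \<Longrightarrow> Phi x \<le> Phi y"
  using Phi_strict_mono[of x y] by (cases "x = y") auto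

lemma Phi_right:
  assumes "Phi a < d" shows "\<exists>y > a. Phi y < d"
proof -
  interpret real_distribution NN by (rule NN_real)
  have "(Phi \<longlongrightarrow> Phi a) (at_right a)"
    using cdf_is_right_cont[of a] unfolding Phi_cdf continuous_within by simp
  then have "eventually (\<lambda>y. Phi y < d) (at_right a)"
    using assms by (rule order_tendstoD)
  then obtain b where b: "b > a" "\<And>y. a < y \<Longrightarrow> y < b \<Longrightarrow> Phi y < d"
    unfolding eventually_at_right[of a "a + 1", OF less_add_one] by auto
  show ?thesis using b(1) b(2)[of "(a + b) / 2"] by (intro exI[of _ "(a + b) / 2"]) auto
qed



lemma spd_CS:
  fixes S :: "real^'n^'n"
  assumes S: "sym_pos_def_mat S"
  shows "(a \<bullet> (S *v e))^2 \<le> (a \<bullet> (S *v a)) * (e \<bullet> (S *v e))"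
proof (cases "e = 0")
  case True then show ?thesis by simp
next
  case False
  define s where "s = e \<bullet> (S *v e)"
  have s: "s > 0" unfolding s_def using spd_pos[OF S False] .
  define l where "l = (a \<bullet> (S *v e)) / s"
  have sym: "e \<bullet> (S *v a) = a \<bullet> (S *v e)" using spd_sym[OF S] by simp
  have "0 \<le> (a - l *\<^sub>R e) \<bullet> (S *v (a - l *\<^sub>R e))" by (rule spd_nonneg[OF S])
  also have "\<dots> = a \<bullet> (S *v a) - 2 * l * (a \<bullet> (S *v e)) + l^2 * s"
    unfolding s_def using sym
    by (simp add: matrix_vector_mult_diff_distrib matrix_vector_mult_scaleR inner_diff_left inner_diff_right power2_eq_square algebra_simps)
  also have "\<dots> = a \<bullet> (S *v a) - (a \<bullet> (S *v e))^2 / s"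
    unfolding l_def using s by (simp add: field_simps power2_eq_square)
  finally have "(a \<bullet> (S *v e))^2 / s \<le> a \<bullet> (S *v a)" by simp
  then show ?thesis using s unfolding s_def[symmetric] by (simp add: divide_le_eq)
qed

lemma ratio_lower:
  fixes S :: "real^'n^'n" and mu e :: "real^'n"
  assumes S: "sym_pos_def_mat S" and e: "e \<noteq> 0" and alpha: "alpha > 0"
  shows "(alpha - mu \<bullet> e) / sqrt (e \<bullet> (S *v e)) > - inv_sqrt_norm S mu"
proof -
  let ?P = "matrix_inv S"
  define a where "a = ?P *v mu"
  define s where "s = e \<bullet> (S *v e)"
  define m where "m = inv_sqrt_norm S mu"
  have s: "s > 0" unfolding s_def using spd_pos[OF S e] .
  have Sa: "S *v a = mu" unfolding a_def by (rule spd_inv_apply(1)[OF S])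
  have mue: "mu \<bullet> e = a \<bullet> (S *v e)"
    using spd_sym[OF S, of a e] Sa by (simp add: inner_commute)
  have aa: "a \<bullet> (S *v a) = mu \<bullet> (?P *v mu)" unfolding Sa unfolding a_def by (simp add: inner_commute)
  have q0: "mu \<bullet> (?P *v mu) \<ge> 0"
    using spd_inv_pos[OF S, of mu] by (cases "mu = 0") auto
  have m: "m = sqrt (mu \<bullet> (?P *v mu))" unfolding m_def inv_sqrt_norm_def ..
  have "(mu \<bullet> e)^2 \<le> (mu \<bullet> (?P *v mu)) * s"
    using spd_CS[OF S, of a e] unfolding mue aa s_def .
  then have "sqrt ((mu \<bullet> e)^2) \<le> sqrt ((mu \<bullet> (?P *v mu)) * s)"
    by (rule real_sqrt_le_mono)
  then have "\<bar>mu \<bullet> e\<bar> \<le> m * sqrt s" unfolding m by (simp add: real_sqrt_mult)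
  then have "alpha - mu \<bullet> e > - m * sqrt s" using alpha by linarith
  then show ?thesis using s unfolding m_def[symmetric] s_def[symmetric]
    by (simp add: less_divide_eq)
qed

lemma ratio_approx:
  fixes S :: "real^'n^'n" and mu :: "real^'n"
  assumes S: "sym_pos_def_mat S" and alpha: "alpha > 0"
    and y: "y > - inv_sqrt_norm S mu"
  shows "\<exists>e. e \<noteq> 0 \<and> (alpha - mu \<bullet> e) / sqrt (e \<bullet> (S *v e)) < y"
proof -
  let ?P = "matrix_inv S"
  define m where "m = inv_sqrt_norm S mu"
  have m: "m = sqrt (mu \<bullet> (?P *v mu))" unfolding m_def inv_sqrt_norm_def ..
  have q0: "mu \<bullet> (?P *v mu) \<ge> 0"
    using spd_inv_pos[OF S, of mu] by (cases "mu = 0") auto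
  have m0: "m \<ge> 0" unfolding m using q0 by simp
  obtain e0 where e0: "e0 \<noteq> 0" "mu \<bullet> e0 = m * sqrt (e0 \<bullet> (S *v e0))"
  proof (cases "mu = 0")
    case True
    then have "m = 0" unfolding m by simp
    then show ?thesis using True by (intro that[of "axis undefined 1"]) (auto simp: axis_eq_0_iff)
  next
    case False
    have ne: "?P *v mu \<noteq> 0" using False spd_inv_apply(1)[OF S, of mu] by auto
    have "(?P *v mu) \<bullet> (S *v (?P *v mu)) = mu \<bullet> (?P *v mu)"
      by (simp add: spd_inv_apply(1)[OF S] inner_commute)
    then have "mu \<bullet> (?P *v mu) = m * sqrt ((?P *v mu) \<bullet> (S *v (?P *v mu)))"
      unfolding m using q0 by simp
    then show ?thesis by (intro that[OF ne])
  qed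
  define s0 where "s0 = sqrt (e0 \<bullet> (S *v e0))"
  have s0: "s0 > 0" unfolding s0_def using spd_pos[OF S e0(1)] by simp
  have ym: "y + m > 0" using y unfolding m_def by simp
  define l where "l = 2 * alpha / (s0 * (y + m))"
  have l: "l > 0" unfolding l_def using alpha s0 ym by simp
  define e where "e = l *\<^sub>R e0"
  have e: "e \<noteq> 0" unfolding e_def using l e0 by simp
  have se: "sqrt (e \<bullet> (S *v e)) = l * s0"
    unfolding e_def s0_def using l by (simp add: matrix_vector_mult_scaleR real_sqrt_mult power2_eq_square[symmetric])
  have mue: "mu \<bullet> e = l * m * s0" unfolding e_def s0_def using e0(2) by simp
  have "(alpha - mu \<bullet> e) / sqrt (e \<bullet> (S *v e)) = alpha / (l * s0) - m"
    unfolding se mue using l s0 by (simp add: field_simps)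
  also have "alpha / (l * s0) = (y + m) / 2"
    unfolding l_def using alpha s0 ym by (simp add: field_simps)
  finally have "(alpha - mu \<bullet> e) / sqrt (e \<bullet> (S *v e)) = (y + m) / 2 - m" .
  also have "\<dots> < y" using ym m0 by simp
  finally show ?thesis using e by blast
qed



theorem lemma5:
  fixes M :: "'a measure" and Z :: "'a \<Rightarrow> real^'n"
    and mu :: "real^'n" and Sigma :: "real^'n^'n"
    and alpha delta :: real
  assumes "prob_space M"
    and "sym_pos_def_mat Sigma"
    and "alpha > 0"
    and "0 < delta" and "delta < 1"
    and "distributed M lborel Z (\<lambda>x. ennreal (mvn_density mu Sigma x))"
  shows "{e :: real^'n. measure M {\<omega> \<in> space M. Z \<omega> \<bullet> e \<ge> alpha} \<ge> 1 - delta} \<noteq> {}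
           \<longleftrightarrow> delta > Phi (- inv_sqrt_norm Sigma mu)"
proof -
  note M = assms(1) and S = assms(2) and alpha = assms(3) and d0 = assms(4) and d1 = assms(5)
    and Z = assms(6)
  define t where "t = (\<lambda>e. (alpha - mu \<bullet> e) / sqrt (e \<bullet> (Sigma *v e)))"
  let ?m = "inv_sqrt_norm Sigma mu"
  have pe: "measure M {\<omega> \<in> space M. Z \<omega> \<bullet> e \<ge> alpha} = 1 - Phi (t e)" if "e \<noteq> 0" for e
    using prob_e[OF M S that Z, of alpha] NN_upper unfolding t_def by simp
  have p0: "measure M {\<omega> \<in> space M. Z \<omega> \<bullet> 0 \<ge> alpha} = 0"
    using alpha by simp
  show ?thesis
  proof
    assume "{e :: real^'n. measure M {\<omega> \<in> space M. Z \<omega> \<bullet> e \<ge> alpha} \<ge> 1 - delta} \<noteq> {}"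
    then obtain e where e: "measure M {\<omega> \<in> space M. Z \<omega> \<bullet> e \<ge> alpha} \<ge> 1 - delta" by blast
    have ne: "e \<noteq> 0" using e p0 d1 by auto
    have "Phi (t e) \<le> delta" using e pe[OF ne] by simp
    moreover have "Phi (- ?m) < Phi (t e)"
      using Phi_strict_mono ratio_lower[OF S ne alpha, of mu] unfolding t_def by blast
    ultimately show "delta > Phi (- ?m)" by simp
  next
    assume "delta > Phi (- ?m)"
    then obtain y where y: "y > - ?m" "Phi y < delta" using Phi_right by blast
    obtain e where e: "e \<noteq> 0" "t e < y" using ratio_approx[OF S alpha y(1)] unfolding t_def by blast
    have "Phi (t e) < delta" using Phi_mono[of "t e" y] e y by simp
    then have "measure M {\<omega> \<in> space M. Z \<omega> \<bullet> e \<ge> alpha} \<ge> 1 - delta" using pe[OF e(1)] by simp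
    then show "{e :: real^'n. measure M {\<omega> \<in> space M. Z \<omega> \<bullet> e \<ge> alpha} \<ge> 1 - delta} \<noteq> {}" by blast
  qed
qed

end
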